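(* Assume the Perturbed Composite Setting (see context). Suppose $\varepsilon\le\mu^2/(14\rho)$, let $\widetilde{\mathcal{T}}_1:=\{z\in\mathcal{X}:\frac{14\varepsilon}{\mu}<\mathrm{dist}(z,\mathcal{X}^* )<\frac{\mu}{4\rho}\}$, $\tilde L:=\sup\{\|\zeta\|:\zeta\in\partial\tilde f(x),x\in\widetilde{\mathcal{T}}_1\}$ (assumed finite) and $\tilde\tau=\mu/\tilde L$. Run the modified Polyak method: given $x_k$ choose $\zeta_k\in\partial\tilde f(x_k)$; if $\zeta_k=0$ stop, otherwise $x_{k+1}=\mathrm{proj}_{\mathcal{X}}\big(x_k-\frac{\tilde f(x_k)-\min_{\mathcal{X}}f}{\|\zeta_k\|^2}\zeta_k\big)$, starting from $x_0\in\widetilde{\mathcal{T}}_1$. Let $K$ be the first index with $\mathrm{dist}(x_K,\mathcal{X}^* )\le14\varepsilon/\mu$ ($K=\infty$ if there is none). Then the method does not stop before $K$, $x_k\in\widetilde{\mathcal{T}}_1$ for all $0\le k<K$, and $$\mathrm{dist}^2(x_{k+1},\mathcal{X}^* )\le\Big(1-\frac{13\tilde\tau^2}{56}\Big)\mathrm{dist}^2(x_k,\mathcal{X}^* )\quad\text{for all }0\le k<K.$$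
   Context: Perturbed Composite Setting: $\mathbf{E},\mathbf{Y}$ are Euclidean spaces ($\|\cdot\|$ the Euclidean norm on $\mathbf{E}$), $\mathcal{X}\subset\mathbf{E}$ nonempty closed convex, $F\colon\mathbf{E}\to\mathbf{Y}$ continuously differentiable with Jacobian $\nabla F(x)$, $h\colon\mathbf{Y}\to\mathbb{R}$ convex and $\eta$-Lipschitz with respect to a norm $|||\cdot|||$ on $\mathbf{Y}$. Set $f=h\circ F$, $f_x(y)=h(F(x)+\nabla F(x)(y-x))$, and assume $\mathcal{X}^*:=\operatorname{argmin}_{\mathcal{X}}f\ne\emptyset$ and constants $\mu,\rho>0$ with $|f(y)-f_x(y)|\le\frac\rho2\|y-x\|^2$ for all $x,y\in\mathcal{X}$ and $f(x)-\min_{\mathcal{X}}f\ge\mu\,\mathrm{dist}(x,\mathcal{X}^* )$ for all $x\in\mathcal{X}$. Fix $e\in\mathbf{Y}$ and set $\tilde f(x)=h(F(x)+e)$, $\varepsilon:=\eta|||e|||$, and $\partial\tilde f(x):=\nabla F(x)^*\partial h(F(x)+e)$ (convex subdifferential of $h$). $\mathrm{proj}_{\mathcal{X}}$ is the Euclidean projection and $\mathrm{dist}$ the Euclidean distance. *)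

theory Defs
  imports "HOL-Analysis.Analysis"
begin

definition is_norm :: "('b::real_vector \<Rightarrow> real) \<Rightarrow> bool" where
  "is_norm N \<longleftrightarrow> (\<forall>u. N u \<ge> 0) \<and> (\<forall>u. N u = 0 \<longleftrightarrow> u = 0)
     \<and> (\<forall>c u. N (scaleR c u) = \<bar>c\<bar> * N u) \<and> (\<forall>u v. N (u + v) \<le> N u + N v)"

definition argmin_on :: "('a \<Rightarrow> real) \<Rightarrow> 'a set \<Rightarrow> 'a set" where
  "argmin_on f X = {x \<in> X. \<forall>y \<in> X. f x \<le> f y}"

definition convex_subdiff :: "('b::real_inner \<Rightarrow> real) \<Rightarrow> 'b \<Rightarrow> 'b set" where
  "convex_subdiff h u = {g. \<forall>z. h z \<ge> h u + inner g (z - u)}"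

definition pert_subdiff ::
  "('b::euclidean_space \<Rightarrow> real) \<Rightarrow> ('a::euclidean_space \<Rightarrow> 'b) \<Rightarrow> ('a \<Rightarrow> 'a \<Rightarrow> 'b) \<Rightarrow> 'b \<Rightarrow> 'a \<Rightarrow> 'a set" where
  "pert_subdiff h F F' e x = adjoint (F' x) ` convex_subdiff h (F x + e)"

end

theory Submission
  imports Defs
begin

lemma nsq: fixes u g :: "'a::real_inner" shows "(norm (u - t *\<^sub>R g))\<^sup>2 = (norm u)\<^sup>2 - 2 * t * inner g u + t\<^sup>2 * (norm g)\<^sup>2"
  unfolding power2_norm_eq_inner by (simp add: inner_diff_left inner_diff_right inner_commute algebra_simps power2_eq_square)

lemma alg:
  fixes d a s G \<epsilon> \<mu> \<rho> :: real
  assumes mu: "\<mu> > 0" and rho: "\<rho> > 0" and eps: "\<epsilon> \<ge> 0" and d1: "14 * \<epsilon> / \<mu> < d"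
    and d2: "d < \<mu> / (4 * \<rho>)" and a: "a \<ge> \<mu> * d - \<epsilon>" and s: "s \<ge> a - \<rho> / 2 * d\<^sup>2 - \<epsilon>"
    and G: "G > 0"
  shows "d\<^sup>2 - 2 * (a / G) * s + (a / G)\<^sup>2 * G \<le> d\<^sup>2 - 195 / 392 * \<mu>\<^sup>2 * d\<^sup>2 / G"
proof -
  have e1: "14 * \<epsilon> < \<mu> * d" using d1 mu by (simp add: field_simps)
  have d0: "d > 0" using e1 eps mu by (smt (verit) mult_pos_pos zero_less_mult_pos)
  have e2: "4 * \<rho> * d < \<mu>" using d2 rho by (simp add: field_simps)
  have r: "\<rho> * d\<^sup>2 \<le> \<mu> * d / 4" proof -
    have "4 * \<rho> * d * d \<le> \<mu> * d" using e2 d0 by (simp add: mult_right_mono)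
    thus ?thesis by (simp add: power2_eq_square)
  qed
  have a1: "a \<ge> 13/14 * (\<mu> * d)" using a e1 by linarith
  have b1: "a - \<rho> * d\<^sup>2 - 2 * \<epsilon> \<ge> 15/28 * (\<mu> * d)" using a1 r e1 by linarith
  have md: "\<mu> * d > 0" using mu d0 by simp
  have p: "a * (a - \<rho> * d\<^sup>2 - 2 * \<epsilon>) \<ge> (13/14 * (\<mu> * d)) * (15/28 * (\<mu> * d))"
    apply (rule mult_mono) using a1 b1 md by auto
  have apos: "a \<ge> 0" using a1 md by linarith
  have q: "2 * a * s - a\<^sup>2 \<ge> a * (a - \<rho> * d\<^sup>2 - 2 * \<epsilon>)"
  proof -
    have "2 * a * s \<ge> 2 * a * (a - \<rho> / 2 * d\<^sup>2 - \<epsilon>)" using s apos by (simp add: mult_left_mono)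
    thus ?thesis by (simp add: algebra_simps power2_eq_square)
  qed
  have "195 / 392 * \<mu>\<^sup>2 * d\<^sup>2 \<le> 2 * a * s - a\<^sup>2" using p q by (simp add: power2_eq_square algebra_simps)
  hence "195 / 392 * \<mu>\<^sup>2 * d\<^sup>2 / G \<le> (2 * a * s - a\<^sup>2) / G" using G by (intro divide_right_mono) auto
  moreover have "d\<^sup>2 - 2 * (a / G) * s + (a / G)\<^sup>2 * G = d\<^sup>2 - (2 * a * s - a\<^sup>2) / G"
    using G by (simp add: field_simps power2_eq_square)
  ultimately show ?thesis by linarith
qed

theorem theorem9p5:
  fixes X :: "'a::euclidean_space set"
    and F :: "'a \<Rightarrow> 'b::euclidean_space"
    and F' :: "'a \<Rightarrow> 'a \<Rightarrow> 'b"
    and h :: "'b \<Rightarrow> real"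
    and N :: "'b \<Rightarrow> real"
    and \<eta> \<mu> \<rho> :: real
    and e :: 'b
    and x \<zeta> :: "nat \<Rightarrow> 'a"
  assumes X_ne: "X \<noteq> {}" and X_closed: "closed X" and X_convex: "convex X"
    and F_deriv: "\<forall>z. (F has_derivative F' z) (at z)"
    and F_C1: "continuous_on UNIV (\<lambda>z. Blinfun (F' z))"
    and h_convex: "convex_on UNIV h"
    and N_norm: "is_norm N"
    and h_lip: "\<forall>u v. \<bar>h u - h v\<bar> \<le> \<eta> * N (u - v)"
    and Xstar_ne: "argmin_on (\<lambda>z. h (F z)) X \<noteq> {}"
    and mu_pos: "\<mu> > 0" and rho_pos: "\<rho> > 0"
    and weak: "\<forall>z\<in>X. \<forall>y\<in>X. \<bar>h (F y) - h (F z + F' z (y - z))\<bar> \<le> \<rho> / 2 * (norm (y - z))\<^sup>2"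
    and sharp: "\<forall>z\<in>X. h (F z) - Inf ((\<lambda>y. h (F y)) ` X)
                   \<ge> \<mu> * infdist z (argmin_on (\<lambda>y. h (F y)) X)"
    and eps_small: "\<eta> * N e \<le> \<mu>\<^sup>2 / (14 * \<rho>)"
    and L_fin: "bdd_above {norm g | g z. g \<in> pert_subdiff h F F' e z \<and> z \<in> X \<and>
                  14 * (\<eta> * N e) / \<mu> < infdist z (argmin_on (\<lambda>y. h (F y)) X) \<and>
                  infdist z (argmin_on (\<lambda>y. h (F y)) X) < \<mu> / (4 * \<rho>)}"
    and x0: "x 0 \<in> X"
            "14 * (\<eta> * N e) / \<mu> < infdist (x 0) (argmin_on (\<lambda>y. h (F y)) X)"
            "infdist (x 0) (argmin_on (\<lambda>y. h (F y)) X) < \<mu> / (4 * \<rho>)"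
    and zeta_sub: "\<forall>k. \<zeta> k \<in> pert_subdiff h F F' e (x k)"
    and step: "\<forall>k. \<zeta> k \<noteq> 0 \<longrightarrow>
                 x (Suc k) = closest_point X
                   (x k - ((h (F (x k) + e) - Inf ((\<lambda>y. h (F y)) ` X)) / (norm (\<zeta> k))\<^sup>2) *\<^sub>R \<zeta> k)"
  shows "let \<epsilon> = \<eta> * N e;
             Xs = argmin_on (\<lambda>y. h (F y)) X;
             T1 = {z \<in> X. 14 * \<epsilon> / \<mu> < infdist z Xs \<and> infdist z Xs < \<mu> / (4 * \<rho>)};
             L = Sup {norm g | g z. g \<in> pert_subdiff h F F' e z \<and> z \<in> T1};
             \<tau> = \<mu> / L
         in \<forall>k. (\<forall>j\<le>k. infdist (x j) Xs > 14 * \<epsilon> / \<mu>) \<longrightarrow>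
               \<zeta> k \<noteq> 0 \<and> x k \<in> T1 \<and>
               (infdist (x (Suc k)) Xs)\<^sup>2 \<le> (1 - 13 * \<tau>\<^sup>2 / 56) * (infdist (x k) Xs)\<^sup>2"
proof -
  define f where "f = (\<lambda>y. h (F y))"
  define Xs where "Xs = argmin_on (\<lambda>y. h (F y)) X"
  define fs where "fs = Inf ((\<lambda>y. h (F y)) ` X)"
  define \<epsilon> where "\<epsilon> = \<eta> * N e"
  obtain xs where xs: "xs \<in> Xs" using Xstar_ne unfolding Xs_def by blast
  have xsX: "xs \<in> X" and xsmin: "\<forall>y\<in>X. h (F xs) \<le> h (F y)"
    using xs unfolding Xs_def argmin_on_def by auto
  have fs_eq: "fs = h (F xs)" unfolding fs_def
    by (rule cInf_eq_minimum) (use xsX xsmin in auto)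
  have XsX: "Xs \<subseteq> X" unfolding Xs_def argmin_on_def by auto
  have Xs_f: "\<And>y. y \<in> Xs \<Longrightarrow> h (F y) = fs"
    using xsX xsmin unfolding Xs_def argmin_on_def fs_eq by (auto intro: antisym)
  have hc: "continuous_on UNIV h" by (rule convex_on_continuous) (use h_convex in auto)
  have Fc: "continuous_on UNIV F"
    using F_deriv has_derivative_continuous continuous_at_imp_continuous_on by blast
  have fc: "continuous_on UNIV (\<lambda>y. h (F y))"
    using continuous_on_compose2[OF hc Fc] by auto
  have Xs_eq: "Xs = X \<inter> {y. h (F y) \<le> h (F xs)}"
    using xsX xsmin unfolding Xs_def argmin_on_def by (auto intro: order_trans)
  have Xs_closed: "closed Xs" unfolding Xs_eq
    by (intro closed_Int X_closed closed_Collect_le fc continuous_on_const)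
  have Xs_ne: "Xs \<noteq> {}" using xs by auto
  have Nprop: "\<And>u. N u \<ge> 0" "\<And>u. N u = 0 \<longleftrightarrow> u = 0" using N_norm unfolding is_norm_def by auto
  have eta: "\<eta> \<ge> 0"
  proof -
    obtain b :: 'b where b: "b \<in> Basis" using nonempty_Basis by blast
    hence b0: "b \<noteq> 0" by auto
    have "N (b - 0) > 0" using Nprop[of "b - 0"] b0 by auto
    moreover have "0 \<le> \<eta> * N (b - 0)" using h_lip[rule_format, of b 0] by linarith
    ultimately show ?thesis by (simp add: zero_le_mult_iff)
  qed
  have eps: "\<epsilon> \<ge> 0" unfolding \<epsilon>_def using eta Nprop by simp
  have onestep: "g \<noteq> 0 \<and> (infdist (closest_point X (z - ((h (F z + e) - fs) / (norm g)\<^sup>2) *\<^sub>R g)) Xs)\<^sup>2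
      \<le> (infdist z Xs)\<^sup>2 - 195 / 392 * \<mu>\<^sup>2 * (infdist z Xs)\<^sup>2 / (norm g)\<^sup>2"
    if zX: "z \<in> X" and d1: "14 * \<epsilon> / \<mu> < infdist z Xs" and d2: "infdist z Xs < \<mu> / (4 * \<rho>)"
      and g: "g \<in> pert_subdiff h F F' e z" for z g
  proof -
    define d where "d = infdist z Xs"
    obtain v where v: "v \<in> convex_subdiff h (F z + e)" and gv: "g = adjoint (F' z) v"
      using g unfolding pert_subdiff_def by blast
    obtain xb where xb: "xb \<in> Xs" and dxb: "infdist z Xs = dist z xb"
      using infdist_attains_inf[OF Xs_closed Xs_ne] by metis
    have xbX: "xb \<in> X" using xb XsX by auto
    have lin: "linear (F' z)" using F_deriv has_derivative_linear by blast
    define w where "w = F' z (xb - z)"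
    have sub: "h (F z + e + w) \<ge> h (F z + e) + inner v w"
      using v unfolding convex_subdiff_def by (auto dest: spec[of _ "F z + e + w"])
    have adj: "inner v w = inner g (xb - z)"
      unfolding gv w_def using adjoint_works[OF lin, of "xb - z" v] by (simp add: inner_commute)
    have lip1: "h (F z + e + w) \<le> h (F z + w) + \<epsilon>"
      using h_lip[rule_format, of "F z + e + w" "F z + w"] unfolding \<epsilon>_def by simp
    have nd: "norm (xb - z) = d" unfolding d_def dxb by (simp add: dist_norm norm_minus_commute)
    have wk: "h (F z + w) \<le> h (F xb) + \<rho> / 2 * d\<^sup>2"
      using abs_le_D2[OF weak[rule_format, OF zX xbX]] nd unfolding w_def by simp
    have fxb: "h (F xb) = fs" using Xs_f xb by simp
    define a where "a = h (F z + e) - fs"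
    define s where "s = inner g (z - xb)"
    have s_ge: "s \<ge> a - \<rho> / 2 * d\<^sup>2 - \<epsilon>"
    proof -
      have "inner g (xb - z) = - s" unfolding s_def by (simp add: inner_diff_right)
      thus ?thesis using sub adj lip1 wk fxb unfolding a_def by linarith
    qed
    have lip2: "h (F z) \<le> h (F z + e) + \<epsilon>"
      using abs_le_D2[OF h_lip[rule_format, of "F z + e" "F z"]] unfolding \<epsilon>_def by simp
    have sh: "h (F z) - fs \<ge> \<mu> * d" using sharp[rule_format, OF zX] unfolding fs_def d_def Xs_def by simp
    have a_ge: "a \<ge> \<mu> * d - \<epsilon>" using sh lip2 unfolding a_def by linarith
    have e1: "14 * \<epsilon> < \<mu> * d" using d1 mu_pos unfolding d_def by (simp add: field_simps)
    have e2: "4 * \<rho> * d < \<mu>" using d2 rho_pos unfolding d_def by (simp add: field_simps)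
    have d0: "d > 0" using e1 eps mu_pos by (smt (verit) mult_pos_pos zero_less_mult_pos)
    have r: "\<rho> * d\<^sup>2 \<le> \<mu> * d / 4"
    proof -
      have "4 * \<rho> * d * d \<le> \<mu> * d" using e2 d0 by (simp add: mult_right_mono)
      thus ?thesis by (simp add: power2_eq_square)
    qed
    have g0: "g \<noteq> 0"
    proof
      assume "g = 0"
      hence "s = 0" unfolding s_def by simp
      thus False using s_ge a_ge e1 r eps by linarith
    qed
    define G where "G = (norm g)\<^sup>2"
    have Gp: "G > 0" using g0 unfolding G_def by simp
    define t where "t = a / G"
    define xp where "xp = closest_point X (z - t *\<^sub>R g)"
    have "infdist xp Xs \<le> dist xp xb" using infdist_le[OF xb] .
    also have "dist xp xb = dist (closest_point X (z - t *\<^sub>R g)) (closest_point X xb)"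
      unfolding xp_def using closest_point_self[OF xbX] by simp
    also have "\<dots> \<le> dist (z - t *\<^sub>R g) xb"
      by (rule closest_point_lipschitz[OF X_convex X_closed X_ne])
    finally have i1: "infdist xp Xs \<le> dist (z - t *\<^sub>R g) xb" .
    have "(infdist xp Xs)\<^sup>2 \<le> (dist (z - t *\<^sub>R g) xb)\<^sup>2"
      using i1 infdist_nonneg by (intro power_mono) auto
    also have "(dist (z - t *\<^sub>R g) xb)\<^sup>2 = d\<^sup>2 - 2 * t * s + t\<^sup>2 * G"
    proof -
      have "(dist (z - t *\<^sub>R g) xb)\<^sup>2 = (norm ((z - xb) - t *\<^sub>R g))\<^sup>2"
        by (simp add: dist_norm algebra_simps)
      also have "\<dots> = (norm (z - xb))\<^sup>2 - 2 * t * inner g (z - xb) + t\<^sup>2 * (norm g)\<^sup>2"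
        by (rule nsq)
      finally show ?thesis using nd unfolding s_def G_def by (simp add: norm_minus_commute)
    qed
    also have "\<dots> \<le> d\<^sup>2 - 195 / 392 * \<mu>\<^sup>2 * d\<^sup>2 / G"
      unfolding t_def
      by (rule alg[OF mu_pos rho_pos eps _ _ a_ge s_ge Gp]) (use d1 d2 in \<open>auto simp: d_def\<close>)
    finally show ?thesis using g0 unfolding xp_def t_def a_def G_def d_def by simp
  qed
  define T1 where "T1 = {z \<in> X. 14 * \<epsilon> / \<mu> < infdist z Xs \<and> infdist z Xs < \<mu> / (4 * \<rho>)}"
  define S where "S = {norm g | g z. g \<in> pert_subdiff h F F' e z \<and> z \<in> T1}"
  define L where "L = Sup S"
  have Sbdd: "bdd_above S" using L_fin unfolding S_def T1_def Xs_def \<epsilon>_def by simp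
  have normL: "norm g \<le> L" if "g \<in> pert_subdiff h F F' e z" "z \<in> T1" for g z
    unfolding L_def by (rule cSup_upper[OF _ Sbdd]) (use that in \<open>auto simp: S_def\<close>)
  have OS: "\<zeta> k \<noteq> 0 \<and> (infdist (x (Suc k)) Xs)\<^sup>2 \<le> (infdist (x k) Xs)\<^sup>2 - 195 / 392 * \<mu>\<^sup>2 * (infdist (x k) Xs)\<^sup>2 / (norm (\<zeta> k))\<^sup>2
      \<and> x (Suc k) \<in> X"
    if xk: "x k \<in> T1" for k
  proof -
    have A: "\<zeta> k \<noteq> 0 \<and> (infdist (closest_point X (x k - ((h (F (x k) + e) - fs) / (norm (\<zeta> k))\<^sup>2) *\<^sub>R \<zeta> k)) Xs)\<^sup>2
      \<le> (infdist (x k) Xs)\<^sup>2 - 195 / 392 * \<mu>\<^sup>2 * (infdist (x k) Xs)\<^sup>2 / (norm (\<zeta> k))\<^sup>2"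
      using onestep[of "x k" "\<zeta> k"] xk zeta_sub unfolding T1_def by auto
    hence B: "x (Suc k) = closest_point X (x k - ((h (F (x k) + e) - fs) / (norm (\<zeta> k))\<^sup>2) *\<^sub>R \<zeta> k)"
      using step unfolding fs_def by auto
    show ?thesis using A B closest_point_in_set[OF X_closed X_ne] by simp
  qed
  have inT1: "x k \<in> T1" if "\<forall>j\<le>k. infdist (x j) Xs > 14 * \<epsilon> / \<mu>" for k
    using that
  proof (induction k)
    case 0
    then show ?case using x0 unfolding T1_def Xs_def \<epsilon>_def by auto
  next
    case (Suc k)
    hence xk: "x k \<in> T1" by auto
    have A: "(infdist (x (Suc k)) Xs)\<^sup>2 \<le> (infdist (x k) Xs)\<^sup>2 - 195 / 392 * \<mu>\<^sup>2 * (infdist (x k) Xs)\<^sup>2 / (norm (\<zeta> k))\<^sup>2"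
      and X1: "x (Suc k) \<in> X" using OS[OF xk] by auto
    have "195 / 392 * \<mu>\<^sup>2 * (infdist (x k) Xs)\<^sup>2 / (norm (\<zeta> k))\<^sup>2 \<ge> 0" by simp
    hence "(infdist (x (Suc k)) Xs)\<^sup>2 \<le> (infdist (x k) Xs)\<^sup>2" using A by linarith
    hence "infdist (x (Suc k)) Xs \<le> infdist (x k) Xs"
      using infdist_nonneg power2_le_imp_le by blast
    then show ?case using xk X1 Suc.prems unfolding T1_def by auto
  qed
  have main: "\<zeta> k \<noteq> 0 \<and> x k \<in> T1 \<and>
               (infdist (x (Suc k)) Xs)\<^sup>2 \<le> (1 - 13 * (\<mu> / L)\<^sup>2 / 56) * (infdist (x k) Xs)\<^sup>2"
    if H: "\<forall>j\<le>k. infdist (x j) Xs > 14 * \<epsilon> / \<mu>" for k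
  proof -
    have xk: "x k \<in> T1" using inT1[OF H] .
    have A: "\<zeta> k \<noteq> 0" "(infdist (x (Suc k)) Xs)\<^sup>2 \<le> (infdist (x k) Xs)\<^sup>2 - 195 / 392 * \<mu>\<^sup>2 * (infdist (x k) Xs)\<^sup>2 / (norm (\<zeta> k))\<^sup>2"
      using OS[OF xk] by auto
    have nL: "norm (\<zeta> k) \<le> L" using normL[OF _ xk] zeta_sub by blast
    have n0: "norm (\<zeta> k) > 0" using A(1) by simp
    define D where "D = \<mu>\<^sup>2 * (infdist (x k) Xs)\<^sup>2"
    have D0: "D \<ge> 0" unfolding D_def by simp
    have "(norm (\<zeta> k))\<^sup>2 \<le> L\<^sup>2" using nL n0 by (intro power_mono) auto
    moreover have "(norm (\<zeta> k))\<^sup>2 > 0" using n0 by simp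
    ultimately have "D / L\<^sup>2 \<le> D / (norm (\<zeta> k))\<^sup>2" proof (intro divide_left_mono D0)
      have "L > 0" using n0 nL by linarith
      hence "L\<^sup>2 > 0" by simp
      thus "0 < L\<^sup>2 * (norm (\<zeta> k))\<^sup>2" using n0 by simp
    qed
    moreover have "D / (norm (\<zeta> k))\<^sup>2 \<ge> 0" using D0 by simp
    ultimately have "13 / 56 * (D / L\<^sup>2) \<le> 195 / 392 * (D / (norm (\<zeta> k))\<^sup>2)" by linarith
    moreover have "13 * (\<mu> / L)\<^sup>2 / 56 * (infdist (x k) Xs)\<^sup>2 = 13 / 56 * (D / L\<^sup>2)"
      unfolding D_def by (simp add: power_divide)
    moreover have "195 / 392 * \<mu>\<^sup>2 * (infdist (x k) Xs)\<^sup>2 / (norm (\<zeta> k))\<^sup>2 = 195 / 392 * (D / (norm (\<zeta> k))\<^sup>2)"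
      unfolding D_def by simp
    ultimately have PQ: "13 * (\<mu> / L)\<^sup>2 / 56 * (infdist (x k) Xs)\<^sup>2 \<le> 195 / 392 * \<mu>\<^sup>2 * (infdist (x k) Xs)\<^sup>2 / (norm (\<zeta> k))\<^sup>2"
      by linarith
    have eq: "(1 - 13 * (\<mu> / L)\<^sup>2 / 56) * (infdist (x k) Xs)\<^sup>2 = (infdist (x k) Xs)\<^sup>2 - 13 * (\<mu> / L)\<^sup>2 / 56 * (infdist (x k) Xs)\<^sup>2"
      by (simp add: algebra_simps)
    show ?thesis using A xk PQ eq by linarith
  qed
  show ?thesis
    unfolding Let_def Xs_def[symmetric] \<epsilon>_def[symmetric] T1_def[symmetric] S_def[symmetric] L_def[symmetric]
    using main by blast
qed

end
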